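(* Let $n\ge3$ and let $\mathbf M_n$ be the lattice with elements $0,a_1,\dots,a_n,1$, where $0<a_i<1$ for all $i$ and the $a_i$ are pairwise incomparable. Let $\pi$ be a permutation of $\{a_1,\dots,a_n\}$ with $\pi(a_i)\ne a_i$ for all $i$, and define $0':=1$, $1':=0$, $a_i':=\pi(a_i)$. Then $(M_n,\vee,\wedge,{}',0,1)$ is a finite subdirectly irreducible member of $\mathcal V$. Consequently $\mathcal V$ has infinitely many pairwise non-isomorphic finite subdirectly irreducible members.
   Context: $\mathcal V$ is the variety of algebras $(L,\vee,\wedge,{}',0,1)$ that are bounded lattices with a complementation $'$ (i.e. $x\vee x'\approx1$, $x\wedge x'\approx0$) satisfying the identities $x\vee y'\approx y'\vee\big((x\vee y')\wedge y\big)$ and $x\wedge y\approx x\wedge\big((x\wedge y)\vee x'\big)$. *)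

theory Defs
  imports Main
begin

record 'a cl_alg =
  carrier :: "'a set"
  join :: "'a \<Rightarrow> 'a \<Rightarrow> 'a"
  meet :: "'a \<Rightarrow> 'a \<Rightarrow> 'a"
  cmp  :: "'a \<Rightarrow> 'a"
  zero :: 'a
  one  :: 'a

definition closed_alg :: "'a cl_alg \<Rightarrow> bool" where
  "closed_alg A \<longleftrightarrow>
     zero A \<in> carrier A \<and> one A \<in> carrier A \<and>
     (\<forall>x\<in>carrier A. cmp A x \<in> carrier A) \<and>
     (\<forall>x\<in>carrier A. \<forall>y\<in>carrier A. join A x y \<in> carrier A \<and> meet A x y \<in> carrier A)"

definition bounded_lattice_alg :: "'a cl_alg \<Rightarrow> bool" where
  "bounded_lattice_alg A \<longleftrightarrow> closed_alg A \<and>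
     (\<forall>x\<in>carrier A. \<forall>y\<in>carrier A. \<forall>z\<in>carrier A.
        join A x (join A y z) = join A (join A x y) z \<and>
        meet A x (meet A y z) = meet A (meet A x y) z) \<and>
     (\<forall>x\<in>carrier A. \<forall>y\<in>carrier A.
        join A x y = join A y x \<and> meet A x y = meet A y x \<and>
        join A x (meet A x y) = x \<and> meet A x (join A x y) = x) \<and>
     (\<forall>x\<in>carrier A. join A x (zero A) = x \<and> meet A x (one A) = x)"

definition in_V :: "'a cl_alg \<Rightarrow> bool" where
  "in_V A \<longleftrightarrow> bounded_lattice_alg A \<and>
     (\<forall>x\<in>carrier A. join A x (cmp A x) = one A \<and> meet A x (cmp A x) = zero A) \<and>
     (\<forall>x\<in>carrier A. \<forall>y\<in>carrier A.
        join A x (cmp A y) = join A (cmp A y) (meet A (join A x (cmp A y)) y) \<and>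
        meet A x y = meet A x (join A (meet A x y) (cmp A x)))"

definition congruence :: "'a cl_alg \<Rightarrow> ('a \<times> 'a) set \<Rightarrow> bool" where
  "congruence A \<theta> \<longleftrightarrow> equiv (carrier A) \<theta> \<and>
     (\<forall>x y. (x, y) \<in> \<theta> \<longrightarrow> (cmp A x, cmp A y) \<in> \<theta>) \<and>
     (\<forall>x y u v. (x, y) \<in> \<theta> \<longrightarrow> (u, v) \<in> \<theta> \<longrightarrow>
        (join A x u, join A y v) \<in> \<theta> \<and> (meet A x u, meet A y v) \<in> \<theta>)"

definition subdirectly_irreducible :: "'a cl_alg \<Rightarrow> bool" where
  "subdirectly_irreducible A \<longleftrightarrow>
     (\<exists>\<mu>. congruence A \<mu> \<and> \<mu> \<noteq> Id_on (carrier A) \<and>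
        (\<forall>\<psi>. congruence A \<psi> \<and> \<psi> \<noteq> Id_on (carrier A) \<longrightarrow> \<mu> \<subseteq> \<psi>))"

definition isomorphic :: "'a cl_alg \<Rightarrow> 'b cl_alg \<Rightarrow> bool" where
  "isomorphic A B \<longleftrightarrow> (\<exists>f. bij_betw f (carrier A) (carrier B) \<and>
     f (zero A) = zero B \<and> f (one A) = one B \<and>
     (\<forall>x\<in>carrier A. f (cmp A x) = cmp B (f x)) \<and>
     (\<forall>x\<in>carrier A. \<forall>y\<in>carrier A.
        f (join A x y) = join B (f x) (f y) \<and> f (meet A x y) = meet B (f x) (f y)))"

datatype mn_elem = Bot | Atom nat | Top

definition mn_join :: "mn_elem \<Rightarrow> mn_elem \<Rightarrow> mn_elem" where
  "mn_join x y = (if x = y then x else if x = Bot then y else if y = Bot then x else Top)"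

definition mn_meet :: "mn_elem \<Rightarrow> mn_elem \<Rightarrow> mn_elem" where
  "mn_meet x y = (if x = y then x else if x = Top then y else if y = Top then x else Bot)"

fun mn_cmp :: "(nat \<Rightarrow> nat) \<Rightarrow> mn_elem \<Rightarrow> mn_elem" where
  "mn_cmp \<pi> Bot = Top"
| "mn_cmp \<pi> Top = Bot"
| "mn_cmp \<pi> (Atom i) = Atom (\<pi> i)"

definition Mn :: "nat \<Rightarrow> (nat \<Rightarrow> nat) \<Rightarrow> mn_elem cl_alg" where
  "Mn n \<pi> = \<lparr> carrier = {Bot, Top} \<union> Atom ` {1..n}, join = mn_join, meet = mn_meet,
              cmp = mn_cmp \<pi>, zero = Bot, one = Top \<rparr>"

definition derangement :: "nat \<Rightarrow> (nat \<Rightarrow> nat) \<Rightarrow> bool" where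
  "derangement n \<pi> \<longleftrightarrow> bij_betw \<pi> {1..n} {1..n} \<and> (\<forall>i\<in>{1..n}. \<pi> i \<noteq> i)"

end

theory Submission imports Defs begin
lemma carr: "carrier (Mn n p) = {Bot, Top} \<union> Atom ` {1..n}" by (simp add: Mn_def)
lemma derD: assumes "derangement n p" "Suc 0 \<le> i" "i \<le> n"
  shows "Suc 0 \<le> p i" "p i \<le> n" "p i \<noteq> i" "i \<noteq> p i"
  using assms unfolding derangement_def bij_betw_def by (auto, metis atLeastAtMost_iff)
lemma inV: assumes "derangement n p" shows "in_V (Mn n p)"
  unfolding in_V_def bounded_lattice_alg_def closed_alg_def
  by (simp add: Mn_def mn_join_def mn_meet_def, safe, auto simp: derD[OF assms] image_iff)

lemma congD: assumes "congruence A \<psi>" 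
  shows "(x,y)\<in>\<psi> \<Longrightarrow> (y,x)\<in>\<psi>" "(x,y)\<in>\<psi> \<Longrightarrow> (y,z)\<in>\<psi> \<Longrightarrow> (x,z)\<in>\<psi>"
    "(x,y)\<in>\<psi> \<Longrightarrow> (cmp A x, cmp A y)\<in>\<psi>"
    "(x,y)\<in>\<psi> \<Longrightarrow> (u,v)\<in>\<psi> \<Longrightarrow> (join A x u, join A y v)\<in>\<psi>"
    "(x,y)\<in>\<psi> \<Longrightarrow> (u,v)\<in>\<psi> \<Longrightarrow> (meet A x u, meet A y v)\<in>\<psi>"
    "x \<in> carrier A \<Longrightarrow> (x,x)\<in>\<psi>"
    "\<psi> \<subseteq> carrier A \<times> carrier A"
  using assms unfolding congruence_def equiv_def refl_on_def sym_def trans_def by blast+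

context
  fixes n p \<psi> assumes n3: "n \<ge> 3" and der: "derangement n p"
    and c: "congruence (Mn n p) \<psi>"
begin

lemma BT_all: assumes "(Bot,Top) \<in> \<psi>" shows "\<psi> = carrier (Mn n p) \<times> carrier (Mn n p)"
proof
  show "\<psi> \<subseteq> carrier (Mn n p) \<times> carrier (Mn n p)" by (rule congD(7)[OF c])
  have "(Bot, x) \<in> \<psi>" if "x \<in> carrier (Mn n p)" for x
    using congD(5)[OF c congD(6)[OF c that] assms]
    by (simp add: Mn_def mn_meet_def split: if_splits)
  then show "carrier (Mn n p) \<times> carrier (Mn n p) \<subseteq> \<psi>"
    using congD(1,2)[OF c] by blast
qed

lemma atomBot: assumes "(Bot, Atom i) \<in> \<psi>" "Suc 0 \<le> i" "i \<le> n" shows "(Bot,Top) \<in> \<psi>"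
proof -
  have "\<exists>k. Suc 0 \<le> k \<and> k \<le> n \<and> k \<noteq> i \<and> k \<noteq> p i"
  proof (cases "i = 1 \<or> p i = 1")
    case True
    have "i = 2 \<or> p i = 2 \<Longrightarrow> ?thesis" using n3 True by (intro exI[of _ 3]) auto
    moreover have "\<not>(i = 2 \<or> p i = 2) \<Longrightarrow> ?thesis" using n3 by (intro exI[of _ 2]) auto
    ultimately show ?thesis by blast
  next
    case False then show ?thesis using n3 by (intro exI[of _ 1]) auto
  qed
  then obtain k where k: "Suc 0 \<le> k" "k \<le> n" "k \<noteq> i" "k \<noteq> p i" by blast
  have pi: "Suc 0 \<le> p i" "p i \<le> n" "p i \<noteq> i" using derD[OF der assms(2,3)] by auto
  have ai: "Atom i \<in> carrier (Mn n p)" "Atom k \<in> carrier (Mn n p)" using assms k by (auto simp: Mn_def)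
  have 1: "(Top, Atom (p i)) \<in> \<psi>" using congD(3)[OF c assms(1)] by (simp add: Mn_def)
  have "(Atom k, Bot) \<in> \<psi>" using congD(5)[OF c 1 congD(6)[OF c ai(2)]] k
    by (simp add: Mn_def mn_meet_def)
  then have 2: "(Bot, Atom k) \<in> \<psi>" using congD(1)[OF c] by blast
  have 3: "(Atom i, Top) \<in> \<psi>" using congD(4)[OF c 2 congD(6)[OF c ai(1)]] k
    by (simp add: Mn_def mn_join_def)
  show ?thesis using congD(2)[OF c assms(1) 3] .
qed

lemma atomTop: assumes "(Atom i, Top) \<in> \<psi>" "Suc 0 \<le> i" "i \<le> n" shows "(Bot,Top) \<in> \<psi>"
proof -
  have "(Atom (p i), Bot) \<in> \<psi>" using congD(3)[OF c assms(1)] by (simp add: Mn_def)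
  then have "(Bot, Atom (p i)) \<in> \<psi>" using congD(1)[OF c] by blast
  then show ?thesis using atomBot derD[OF der assms(2,3)] by blast
qed

lemma nontriv: assumes "(x,y) \<in> \<psi>" "x \<noteq> y" shows "(Bot,Top) \<in> \<psi>"
proof -
  have xy: "x \<in> carrier (Mn n p)" "y \<in> carrier (Mn n p)" using congD(7)[OF c] assms by auto
  have yx: "(y,x) \<in> \<psi>" using congD(1)[OF c assms(1)] .
  show ?thesis
  proof (cases x)
    case Bot then show ?thesis using assms xy atomBot by (cases y) (auto simp: Mn_def)
  next
    case Top then show ?thesis using assms yx xy atomTop by (cases y) (auto simp: Mn_def)
  next
    case (Atom i)
    then have i: "Suc 0 \<le> i" "i \<le> n" using xy by (auto simp: Mn_def)
    show ?thesis
    proof (cases y)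
      case Bot then show ?thesis using Atom yx i atomBot by auto
    next
      case Top then show ?thesis using Atom assms i atomTop by auto
    next
      case (Atom j)
      have "(meet (Mn n p) x x, meet (Mn n p) y x) \<in> \<psi>"
        using congD(5)[OF c congD(6)[OF c xy(1)] assms(1)] congD(5)[OF c assms(1) congD(6)[OF c xy(1)]] by blast
      then have "(Atom i, Bot) \<in> \<psi>" using Atom \<open>x = Atom i\<close> assms(2) by (simp add: Mn_def mn_meet_def)
      then show ?thesis using congD(1)[OF c] atomBot i by blast
    qed
  qed
qed
end

lemma SI: assumes "n \<ge> 3" "derangement n p" shows "subdirectly_irreducible (Mn n p)"
  unfolding subdirectly_irreducible_def
proof (intro exI conjI allI impI)
  let ?C = "carrier (Mn n p) \<times> carrier (Mn n p)"
  show "congruence (Mn n p) ?C"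
    using inV[OF assms(2)] unfolding congruence_def in_V_def bounded_lattice_alg_def closed_alg_def
    by (auto simp: equiv_def refl_on_def sym_def trans_def)
  show "?C \<noteq> Id_on (carrier (Mn n p))" by (auto simp: Mn_def Id_on_def)
  fix \<psi> assume h: "congruence (Mn n p) \<psi> \<and> \<psi> \<noteq> Id_on (carrier (Mn n p))"
  then have "\<exists>x y. (x,y) \<in> \<psi> \<and> x \<noteq> y"
    using congD(6,7)[OF conjunct1[OF h]] by (auto simp: Id_on_def)
  then obtain x y where "(x,y) \<in> \<psi>" "x \<noteq> y" by blast
  then show "?C \<subseteq> \<psi>" using BT_all[OF assms h[THEN conjunct1]] nontriv[OF assms h[THEN conjunct1]] by blast
qed

lemma cardMn: "card (carrier (Mn n p)) = n + 2"
proof -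
  have "card (Atom ` {1..n}) = n" by (simp add: card_image inj_on_def)
  moreover have "carrier (Mn n p) = insert Bot (insert Top (Atom ` {1..n}))" by (auto simp: Mn_def)
  moreover have "Bot \<notin> Atom ` {1..n}" "Top \<notin> Atom ` {1..n}" by auto
  ultimately show ?thesis by simp
qed

definition sh :: "nat \<Rightarrow> nat \<Rightarrow> nat" where "sh n i = (if i = n then 1 else Suc i)"

lemma der_sh: assumes "n \<ge> 2" shows "derangement n (sh n)"
proof -
  have "inj_on (sh n) {1..n}" by (auto simp: inj_on_def sh_def split: if_splits)
  moreover have "sh n ` {1..n} = {1..n}"
  proof
    show "sh n ` {1..n} \<subseteq> {1..n}" using assms by (auto simp: sh_def)
    show "{1..n} \<subseteq> sh n ` {1..n}"
    proof
      fix j assume j: "j \<in> {1..n}"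
      show "j \<in> sh n ` {1..n}"
      proof (cases "j = 1")
        case True then show ?thesis using assms by (intro image_eqI[of _ _ n]) (auto simp: sh_def)
      next
        case False then show ?thesis using j by (intro image_eqI[of _ _ "j - 1"]) (auto simp: sh_def)
      qed
    qed
  qed
  ultimately show ?thesis using assms by (auto simp: derangement_def bij_betw_def sh_def)
qed

theorem mainTheorem10:
  shows "(\<forall>n \<pi>. n \<ge> 3 \<and> derangement n \<pi> \<longrightarrow>
            finite (carrier (Mn n \<pi>)) \<and> in_V (Mn n \<pi>) \<and> subdirectly_irreducible (Mn n \<pi>))
       \<and> (\<exists>F :: nat \<Rightarrow> mn_elem cl_alg.
            (\<forall>k. finite (carrier (F k)) \<and> in_V (F k) \<and> subdirectly_irreducible (F k)) \<and>
            (\<forall>k l. k \<noteq> l \<longrightarrow> \<not> isomorphic (F k) (F l)))"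
proof (intro conjI allI impI)
  fix n \<pi> assume h: "n \<ge> 3 \<and> derangement n \<pi>"
  show "finite (carrier (Mn n \<pi>))" by (simp add: Mn_def)
  show "in_V (Mn n \<pi>)" using inV h by blast
  show "subdirectly_irreducible (Mn n \<pi>)" using SI h by blast
next
  show "\<exists>F :: nat \<Rightarrow> mn_elem cl_alg.
            (\<forall>k. finite (carrier (F k)) \<and> in_V (F k) \<and> subdirectly_irreducible (F k)) \<and>
            (\<forall>k l. k \<noteq> l \<longrightarrow> \<not> isomorphic (F k) (F l))"
  proof (intro exI[of _ "\<lambda>k. Mn (k+3) (sh (k+3))"] conjI allI impI)
    fix k
    show "finite (carrier (Mn (k+3) (sh (k+3))))" by (simp add: Mn_def)
    show "in_V (Mn (k+3) (sh (k+3)))" by (rule inV, rule der_sh) simp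
    show "subdirectly_irreducible (Mn (k+3) (sh (k+3)))" by (rule SI, simp, rule der_sh) simp
  next
    fix k l :: nat assume "k \<noteq> l"
    then show "\<not> isomorphic (Mn (k+3) (sh (k+3))) (Mn (l+3) (sh (l+3)))"
      unfolding isomorphic_def using bij_betw_same_card cardMn by (metis add_right_cancel)
  qed
qed
end
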